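(* Let $\mathscr{A}$ be a unital $C^*$-algebra with identity $I$, $\mathscr H$ a Hilbert space, and $\Phi:\mathscr{A}\to\mathbb{B}(\mathscr{H})$ a unital completely positive linear map. If $A,B\in\mathscr{A}$ belong to the balls of diameter $[m_1I,M_1I]$ and $[m_2I,M_2I]$ respectively, for some $m_1,M_1,m_2,M_2\in\mathbb C$, then $$\left|\Phi(AB)-\Phi(A)\Phi(B)\right|\le\tfrac14|M_1-m_1|\,|M_2-m_2|\,I .$$
   Context: For an operator $X$, $|X|=(X^*X)^{1/2}$. In a normed space the ball of diameter $[x,y]$ is $\{z:\|z-(x+y)/2\|\le\|(x-y)/2\|\}$; thus $A$ lies in the ball of diameter $[mI,MI]$ iff $\|A-\frac{M+m}{2}I\|\le\frac{|M-m|}{2}$. *)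

theory Defs
  imports "HOL-Analysis.Analysis"
begin

class cvector = real_vector +
  fixes scaleC :: "complex \<Rightarrow> 'a \<Rightarrow> 'a"
  assumes scaleC_add_right: "scaleC a (x + y) = scaleC a x + scaleC a y"
    and scaleC_add_left: "scaleC (a + b) x = scaleC a x + scaleC b x"
    and scaleC_scaleC: "scaleC a (scaleC b x) = scaleC (a * b) x"
    and scaleC_one: "scaleC 1 x = x"
    and scaleR_scaleC: "scaleR r x = scaleC (complex_of_real r) x"

class cnormed_vector = cvector + real_normed_vector +
  assumes norm_scaleC: "norm (scaleC a x) = cmod a * norm x"

class cnormed_algebra_1 = cnormed_vector + real_normed_algebra_1 +
  assumes scaleC_mult_left: "scaleC a (x * y) = scaleC a x * y"
    and scaleC_mult_right: "scaleC a (x * y) = x * scaleC a y"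

class unital_cstar_algebra = cnormed_algebra_1 + banach +
  fixes cstar :: "'a \<Rightarrow> 'a"
  assumes cstar_cstar: "cstar (cstar x) = x"
    and cstar_add: "cstar (x + y) = cstar x + cstar y"
    and cstar_scaleC: "cstar (scaleC a x) = scaleC (cnj a) (cstar x)"
    and cstar_mult: "cstar (x * y) = cstar y * cstar x"
    and cstar_identity: "norm (cstar x * x) = (norm x)\<^sup>2"

definition pos_matrix :: "nat \<Rightarrow> (nat \<Rightarrow> nat \<Rightarrow> 'a::unital_cstar_algebra) \<Rightarrow> bool" where
  "pos_matrix n a \<longleftrightarrow> (\<exists>X :: nat \<Rightarrow> nat \<Rightarrow> 'a.
      \<forall>i<n. \<forall>j<n. a i j = (\<Sum>k<n. cstar (X k i) * X k j))"

text \<open>Inner product linear in the second argument, conjugate linear in the first.\<close>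
class chilbert_space = cnormed_vector + banach +
  fixes cinner :: "'a \<Rightarrow> 'a \<Rightarrow> complex"
  assumes cinner_cnj: "cnj (cinner x y) = cinner y x"
    and cinner_add_right: "cinner x (y + z) = cinner x y + cinner x z"
    and cinner_scaleC_right: "cinner x (scaleC a y) = a * cinner x y"
    and cinner_self_nonneg: "0 \<le> Re (cinner x x)"
    and cinner_self_zero: "cinner x x = 0 \<Longrightarrow> x = 0"
    and norm_cinner: "norm x = sqrt (Re (cinner x x))"

definition bounded_op :: "('h::chilbert_space \<Rightarrow> 'h) \<Rightarrow> bool" where
  "bounded_op T \<longleftrightarrow> (\<forall>x y. T (x + y) = T x + T y) \<and> (\<forall>a x. T (scaleC a x) = scaleC a (T x))
      \<and> (\<exists>K. \<forall>x. norm (T x) \<le> K * norm x)"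

definition op_adjoint :: "('h::chilbert_space \<Rightarrow> 'h) \<Rightarrow> ('h \<Rightarrow> 'h)" where
  "op_adjoint T = (THE S. \<forall>x y. cinner (T x) y = cinner x (S y))"

definition positive_op :: "('h::chilbert_space \<Rightarrow> 'h) \<Rightarrow> bool" where
  "positive_op T \<longleftrightarrow> (\<forall>x. cinner x (T x) \<in> \<real> \<and> 0 \<le> Re (cinner x (T x)))"

definition op_le :: "('h::chilbert_space \<Rightarrow> 'h) \<Rightarrow> ('h \<Rightarrow> 'h) \<Rightarrow> bool" where
  "op_le S T \<longleftrightarrow> positive_op (\<lambda>x. T x - S x)"

definition op_sqrt :: "('h::chilbert_space \<Rightarrow> 'h) \<Rightarrow> ('h \<Rightarrow> 'h)" where
  "op_sqrt P = (THE Q. bounded_op Q \<and> positive_op Q \<and> Q \<circ> Q = P)"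

definition op_abs :: "('h::chilbert_space \<Rightarrow> 'h) \<Rightarrow> ('h \<Rightarrow> 'h)" where
  "op_abs T = op_sqrt (op_adjoint T \<circ> T)"

definition ucp_map :: "('a::unital_cstar_algebra \<Rightarrow> ('h::chilbert_space \<Rightarrow> 'h)) \<Rightarrow> bool" where
  "ucp_map \<Phi> \<longleftrightarrow>
     (\<forall>a. bounded_op (\<Phi> a))
   \<and> (\<forall>a b. \<Phi> (a + b) = (\<lambda>x. \<Phi> a x + \<Phi> b x))
   \<and> (\<forall>c a. \<Phi> (scaleC c a) = (\<lambda>x. scaleC c (\<Phi> a x)))
   \<and> \<Phi> 1 = id
   \<and> (\<forall>n a. pos_matrix n a \<longrightarrow>
        (\<forall>v :: nat \<Rightarrow> 'h. (\<Sum>i<n. \<Sum>j<n. cinner (v i) (\<Phi> (a i j) (v j))) \<in> \<real>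
            \<and> 0 \<le> Re (\<Sum>i<n. \<Sum>j<n. cinner (v i) (\<Phi> (a i j) (v j)))))"

definition in_diam_ball :: "complex \<Rightarrow> complex \<Rightarrow> 'a::unital_cstar_algebra \<Rightarrow> bool" where
  "in_diam_ball m M A \<longleftrightarrow> norm (A - scaleC ((M + m) / 2) 1) \<le> cmod (M - m) / 2"

end

theory Submission
  imports Defs "HOL-Computational_Algebra.Formal_Power_Series"
begin
lemma scaleC_zero_left[simp]: "scaleC 0 (x::'a::cvector) = 0"
proof -
  have "scaleC 0 x + scaleC 0 x = scaleC 0 x" using scaleC_add_left[of 0 0 x, symmetric] by (simp only: add_0_left)
  thus ?thesis by simp
qed

lemma scaleC_zero_right[simp]: "scaleC a (0::'a::cvector) = 0"
proof -
  have "scaleC a (0::'a) + scaleC a 0 = scaleC a 0" using scaleC_add_right[of a 0 0, symmetric] by (simp only: add_0_left)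
  thus ?thesis by simp
qed

lemma scaleC_minus_right: "scaleC a (- x::'a::cvector) = - scaleC a x"
proof -
  have "scaleC a x + scaleC a (-x) = scaleC a (x + -x)" by (rule scaleC_add_right[symmetric])
  also have "\<dots> = 0" by simp
  finally show ?thesis by (simp only: add_eq_0_iff)
qed

lemma scaleC_diff_right: "scaleC a (x - y::'a::cvector) = scaleC a x - scaleC a y"
  by (simp only: diff_conv_add_uminus scaleC_add_right scaleC_minus_right)

lemma scaleC_minus_left: "scaleC (- a) (x::'a::cvector) = - scaleC a x"
proof -
  have "scaleC a x + scaleC (-a) x = scaleC (a + -a) x" by (rule scaleC_add_left[symmetric])
  also have "\<dots> = 0" by simp
  finally show ?thesis by (simp only: add_eq_0_iff)
qed

lemma cinner_add_left: "cinner (x + y) (z::'a::chilbert_space) = cinner x z + cinner y z"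
proof -
  have "cinner (x+y) z = cnj (cinner z (x+y))" using cinner_cnj[of z "x+y"] by simp
  thus ?thesis by (simp add: cinner_add_right cinner_cnj)
qed

lemma cinner_scaleC_left: "cinner (scaleC a x) (z::'a::chilbert_space) = cnj a * cinner x z"
proof -
  have "cinner (scaleC a x) z = cnj (cinner z (scaleC a x))" using cinner_cnj[of z "scaleC a x"] by simp
  thus ?thesis by (simp add: cinner_scaleC_right cinner_cnj)
qed

lemma cinner_zero_right[simp]: "cinner x (0::'a::chilbert_space) = 0"
proof -
  have "cinner x (0::'a) = cinner x (scaleC 0 0)" by simp
  also have "\<dots> = 0" by (simp only: cinner_scaleC_right) simp
  finally show ?thesis .
qed

lemma cinner_zero_left[simp]: "cinner (0::'a::chilbert_space) x = 0"
proof -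
  have "cinner 0 x = cnj (cinner x (0::'a))" using cinner_cnj[of x 0] by simp
  thus ?thesis by simp
qed

lemma cinner_minus_right: "cinner x (- y::'a::chilbert_space) = - cinner x y"
proof -
  have "cinner x y + cinner x (-y) = cinner x (y + -y)" by (rule cinner_add_right[symmetric])
  also have "\<dots> = 0" by simp
  finally show ?thesis by (simp only: add_eq_0_iff)
qed

lemma cinner_minus_left: "cinner (- x) (y::'a::chilbert_space) = - cinner x y"
proof -
  have "cinner x y + cinner (-x) y = cinner (x + -x) y" by (rule cinner_add_left[symmetric])
  also have "\<dots> = 0" by simp
  finally show ?thesis by (simp only: add_eq_0_iff)
qed

lemma cinner_diff_right: "cinner x (y - z::'a::chilbert_space) = cinner x y - cinner x z"
  by (simp only: diff_conv_add_uminus cinner_add_right cinner_minus_right)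

lemma cinner_diff_left: "cinner (x - y) (z::'a::chilbert_space) = cinner x z - cinner y z"
  by (simp only: diff_conv_add_uminus cinner_add_left cinner_minus_left)

lemma cinner_scaleR_right: "cinner x (scaleR r y::'a::chilbert_space) = of_real r * cinner x y"
  by (simp add: scaleR_scaleC cinner_scaleC_right)

lemma cinner_scaleR_left: "cinner (scaleR r x) (y::'a::chilbert_space) = of_real r * cinner x y"
  by (simp add: scaleR_scaleC cinner_scaleC_left)

lemma cinner_self_real: "cinner x (x::'a::chilbert_space) \<in> \<real>"
  using cinner_cnj[of x x] by (simp add: Reals_cnj_iff)

lemma cinner_self: "cinner x (x::'a::chilbert_space) = of_real ((norm x)\<^sup>2)"
proof -
  have "cinner x x = of_real (Re (cinner x x))" using cinner_self_real[of x]
    by (simp add: complex_is_Real_iff complex_eq_iff)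
  moreover have "Re (cinner x x) = (norm x)\<^sup>2"
    by (simp add: norm_cinner cinner_self_nonneg)
  ultimately show ?thesis by simp
qed

lemma Re_cinner_self: "Re (cinner x (x::'a::chilbert_space)) = (norm x)\<^sup>2"
  by (simp add: cinner_self)

lemma cinner_swap_cnj: "cinner y (x::'a::chilbert_space) = cnj (cinner x y)"
  by (simp add: cinner_cnj)

lemma cauchy_schwarz_c: "cmod (cinner x (y::'a::chilbert_space)) \<le> norm x * norm y"
proof (cases "y = 0")
  case True thus ?thesis by simp
next
  case False
  define t where "t = cinner y x / of_real ((norm y)\<^sup>2)"
  have ny: "norm y > 0" using False by simp
  have e1: "t * cinner y y = cinner y x" using ny by (simp add: t_def cinner_self)
  have e2: "t * cinner x y = of_real ((cmod (cinner x y))\<^sup>2 / (norm y)\<^sup>2)"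
  proof -
    have c: "cinner y x = cnj (cinner x y)" by (simp add: cinner_cnj)
    have d: "cnj (cinner x y) * cinner x y = of_real ((cmod (cinner x y))\<^sup>2)"
      using complex_norm_square[of "cinner x y"] by (simp add: mult.commute)
    show ?thesis unfolding t_def c
      by (simp add: d)
  qed
  have "0 \<le> Re (cinner (x - scaleC t y) (x - scaleC t y))" by (rule cinner_self_nonneg)
  also have "cinner (x - scaleC t y) (x - scaleC t y)
      = cinner x x - t * cinner x y - cnj t * cinner y x + cnj t * (t * cinner y y)"
    by (simp add: cinner_diff_left cinner_diff_right cinner_scaleC_left cinner_scaleC_right mult.assoc right_diff_distrib)
  also have "\<dots> = cinner x x - t * cinner x y" by (simp add: e1)
  also have "\<dots> = of_real ((norm x)\<^sup>2 - (cmod (cinner x y))\<^sup>2 / (norm y)\<^sup>2)"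
    by (simp add: e2 cinner_self)
  finally have "0 \<le> (norm x)\<^sup>2 - (cmod (cinner x y))\<^sup>2 / (norm y)\<^sup>2"
    by simp
  hence "(cmod (cinner x y))\<^sup>2 / (norm y)\<^sup>2 \<le> (norm x)\<^sup>2" by simp
  hence "(cmod (cinner x y))\<^sup>2 \<le> (norm x)\<^sup>2 * (norm y)\<^sup>2" using ny
    by (simp add: pos_divide_le_eq)
  hence "(cmod (cinner x y))\<^sup>2 \<le> (norm x * norm y)\<^sup>2" by (simp add: power_mult_distrib)
  thus ?thesis by (rule power2_le_imp_le) simp
qed

lemma cinner_ext: "(\<And>z. cinner z x = cinner z (y::'a::chilbert_space)) \<Longrightarrow> x = y"
proof -
  assume h: "\<And>z. cinner z x = cinner z y"
  have "cinner (x - y) (x - y) = 0" using h[of "x - y"] by (simp add: cinner_diff_right)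
  hence "x - y = 0" by (rule cinner_self_zero)
  thus ?thesis by simp
qed

typedef (overloaded) ('h::real_normed_vector) bop = "UNIV :: ('h \<Rightarrow>\<^sub>L 'h) set"
  morphisms bop Bop by simp

setup_lifting type_definition_bop

instantiation bop :: (real_normed_vector) real_normed_vector
begin
lift_definition norm_bop :: "'a bop \<Rightarrow> real" is norm .
lift_definition minus_bop :: "'a bop \<Rightarrow> 'a bop \<Rightarrow> 'a bop" is "(-)" .
lift_definition plus_bop :: "'a bop \<Rightarrow> 'a bop \<Rightarrow> 'a bop" is "(+)" .
lift_definition uminus_bop :: "'a bop \<Rightarrow> 'a bop" is "uminus" .
lift_definition zero_bop :: "'a bop" is "0" .
lift_definition scaleR_bop :: "real \<Rightarrow> 'a bop \<Rightarrow> 'a bop" is "scaleR" .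
definition dist_bop :: "'a bop \<Rightarrow> 'a bop \<Rightarrow> real" where "dist_bop a b = norm (a - b)"
definition sgn_bop :: "'a bop \<Rightarrow> 'a bop" where "sgn_bop x = scaleR (inverse (norm x)) x"
definition uniformity_bop :: "('a bop \<times> 'a bop) filter" where
  "uniformity_bop = (INF e\<in>{0 <..}. principal {(x, y). dist x y < e})"
definition open_bop :: "'a bop set \<Rightarrow> bool" where
  "open_bop S = (\<forall>x\<in>S. \<forall>\<^sub>F (x', y) in uniformity. x' = x \<longrightarrow> y \<in> S)"
instance
  apply standard
  unfolding dist_bop_def open_bop_def sgn_bop_def uniformity_bop_def
  apply (transfer; simp add: algebra_simps norm_triangle_ineq)+
  done

end

instantiation bop :: (real_normed_vector) "{real_normed_algebra, monoid_mult}"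
begin
lift_definition times_bop :: "'a bop \<Rightarrow> 'a bop \<Rightarrow> 'a bop" is "blinfun_compose" .
lift_definition one_bop :: "'a bop" is "id_blinfun" .
instance
  apply standard
  apply (transfer; rule blinfun_eqI; simp add: blinfun.bilinear_simps)+
  apply transfer
  apply (rule norm_blinfun_compose)
  done
end

instance bop :: (banach) banach
proof
  fix X :: "nat \<Rightarrow> 'a bop"
  assume "Cauchy X"
  have d: "dist (bop a) (bop b) = dist a b" for a b :: "'a bop"
    by (simp add: dist_norm dist_bop_def norm_bop.rep_eq minus_bop.rep_eq)
  have "Cauchy (\<lambda>n. bop (X n))" using \<open>Cauchy X\<close> unfolding Cauchy_def d .
  then obtain L where L: "(\<lambda>n. bop (X n)) \<longlonglongrightarrow> L" using convergent_def Cauchy_convergent_iff by blast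
  have "X \<longlonglongrightarrow> Bop L"
    using L unfolding tendsto_iff by (simp add: d[symmetric] Bop_inverse)
  thus "convergent X" unfolding convergent_def by blast
qed

definition bc :: "nat \<Rightarrow> real" where "bc n = (-1)^n * ((1/2) gchoose n)"

lemma gchoose_Suc_rec: "(a::real) gchoose (Suc k) = (a - of_nat k) * (a gchoose k) / of_nat (Suc k)"
  using gbinomial_mult_1[of a k] by (simp add: field_simps del: of_nat_Suc)

lemma bc_0[simp]: "bc 0 = 1" by (simp add: bc_def)

lemma bc_Suc: "bc (Suc k) = bc k * (of_nat k - 1/2) / of_nat (Suc k)"
  unfolding bc_def gchoose_Suc_rec by (simp add: field_simps del: of_nat_Suc)

lemma bc_nonpos: "n \<ge> 1 \<Longrightarrow> bc n \<le> 0"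
proof (induction n)
  case 0 thus ?case by simp
next
  case (Suc n)
  show ?case
  proof (cases "n = 0")
    case True thus ?thesis by (simp add: bc_Suc)
  next
    case False
    hence "bc n \<le> 0" "of_nat n - 1/2 \<ge> (0::real)" using Suc by auto
    thus ?thesis unfolding bc_Suc by (simp add: divide_nonpos_pos mult_nonpos_nonneg)
  qed
qed

lemma bc_partial_nonneg: "0 \<le> (\<Sum>k\<le>m. bc k)"
proof -
  have eq: "(\<Sum>k\<le>m. bc k) = (-1)^m * ((-1/2) gchoose m)"
    using gbinomial_sum_lower_neg[of "1/2::real" m] by (simp add: bc_def mult.commute)
  have "0 \<le> (-1)^m * ((-1/2::real) gchoose m)"
  proof (induction m)
    case 0 thus ?case by simp
  next
    case (Suc m)
    have "(-1::real)^Suc m * ((-1/2) gchoose Suc m)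
        = ((-1)^m * ((-1/2) gchoose m)) * ((of_nat m + 1/2) / of_nat (Suc m))"
      unfolding gchoose_Suc_rec by (simp add: field_simps del: of_nat_Suc)
    also have "\<dots> \<ge> 0" by (rule mult_nonneg_nonneg[OF Suc.IH]) (auto intro: divide_nonneg_pos)
    finally show ?case .
  qed
  thus ?thesis using eq by simp
qed

lemma abs_bc: "\<bar>bc k\<bar> = (if k = 0 then 2 else 0) - bc k"
  using bc_nonpos[of k] by (cases "k = 0") auto

lemma bc_abs_partial: "(\<Sum>k\<le>m. \<bar>bc k\<bar>) \<le> 2"
proof -
  have "(\<Sum>k\<le>m. \<bar>bc k\<bar>) = (\<Sum>k\<le>m. (if k = 0 then 2 else 0)) - (\<Sum>k\<le>m. bc k)"
    by (simp add: abs_bc sum_subtractf)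
  also have "(\<Sum>k\<le>m. (if k = 0 then 2 else (0::real))) = 2"
    by (simp add: sum.delta)
  finally show ?thesis using bc_partial_nonneg[of m] by simp
qed

lemma bc_abs_partial': "(\<Sum>k<m. \<bar>bc k\<bar>) \<le> 2"
proof (cases m)
  case 0 thus ?thesis by simp
next
  case (Suc n) thus ?thesis using bc_abs_partial[of n] by (simp add: lessThan_Suc_atMost)
qed

lemma summable_abs_bc: "summable (\<lambda>k. \<bar>bc k\<bar>)"
  by (rule summableI_nonneg_bounded[OF _ bc_abs_partial']) simp

lemma suminf_abs_bc: "(\<Sum>k. \<bar>bc k\<bar>) \<le> 2"
  using summable_abs_bc bc_abs_partial' by (intro suminf_le_const) auto

lemma bc_cauchy: "(\<Sum>i\<le>n. bc i * bc (n - i)) = (-1)^n * real (1 choose n)"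
proof -
  have "(\<Sum>i\<le>n. bc i * bc (n - i)) = (\<Sum>i\<le>n. (-1)^n * (((1/2::real) gchoose i) * ((1/2) gchoose (n - i))))"
  proof (rule sum.cong[OF refl])
    fix i assume "i \<in> {..n}"
    hence "(-1::real)^i * (-1)^(n-i) = (-1)^n" by (simp flip: power_add)
    thus "bc i * bc (n - i) = (-1)^n * (((1/2::real) gchoose i) * ((1/2) gchoose (n - i)))"
      unfolding bc_def by (metis (no_types, lifting) mult.assoc mult.left_commute)
  qed
  also have "\<dots> = (-1)^n * ((of_nat 1::real) gchoose n)"
    using gbinomial_Vandermonde[of "1/2::real" "1/2" n]
    by (simp add: sum_distrib_left[symmetric] atMost_atLeast0)
  finally show ?thesis by (simp only: binomial_gbinomial[symmetric])
qed

lemma sqrt_series: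
  fixes y :: "'b::{real_normed_algebra, monoid_mult, banach}"
  assumes n1: "norm (1::'b) \<le> 1" and ny: "norm y \<le> 1"
  shows "summable (\<lambda>n. norm (bc n *\<^sub>R y ^ n))"
    and "(\<Sum>n. bc n *\<^sub>R y ^ n) * (\<Sum>n. bc n *\<^sub>R y ^ n) = 1 - y"
proof -
  have pw: "norm (y ^ n) \<le> 1" for n
  proof (induction n)
    case 0 thus ?case using n1 by simp
  next
    case (Suc n)
    have "norm (y ^ Suc n) \<le> norm y * norm (y ^ n)" by (simp add: norm_mult_ineq)
    also have "\<dots> \<le> 1 * 1" using Suc ny by (intro mult_mono) auto
    finally show ?case by simp
  qed
  show sm: "summable (\<lambda>n. norm (bc n *\<^sub>R y ^ n))"
  proof (rule summable_comparison_test[OF _ summable_abs_bc])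
    show "\<exists>N. \<forall>n\<ge>N. norm (norm (bc n *\<^sub>R y ^ n)) \<le> \<bar>bc n\<bar>"
      using pw by (auto intro!: exI[of _ 0] mult_left_le)
  qed
  have "(\<Sum>n. bc n *\<^sub>R y ^ n) * (\<Sum>n. bc n *\<^sub>R y ^ n)
      = (\<Sum>k. \<Sum>i\<le>k. (bc i *\<^sub>R y ^ i) * (bc (k - i) *\<^sub>R y ^ (k - i)))"
    by (rule Cauchy_product[OF sm sm])
  also have "\<dots> = (\<Sum>k. ((-1)^k * real (1 choose k)) *\<^sub>R y ^ k)"
  proof (rule suminf_cong)
    fix k
    have "(\<Sum>i\<le>k. (bc i *\<^sub>R y ^ i) * (bc (k - i) *\<^sub>R y ^ (k - i)))
        = (\<Sum>i\<le>k. (bc i * bc (k - i)) *\<^sub>R y ^ k)"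
    proof (rule sum.cong[OF refl])
      fix i assume "i \<in> {..k}"
      hence "y ^ i * y ^ (k - i) = y ^ k" by (simp flip: power_add)
      thus "(bc i *\<^sub>R y ^ i) * (bc (k - i) *\<^sub>R y ^ (k - i)) = (bc i * bc (k - i)) *\<^sub>R y ^ k"
        by simp
    qed
    also have "\<dots> = ((-1)^k * real (1 choose k)) *\<^sub>R y ^ k"
      by (simp add: scaleR_sum_left[symmetric] bc_cauchy)
    finally show "(\<Sum>i\<le>k. (bc i *\<^sub>R y ^ i) * (bc (k - i) *\<^sub>R y ^ (k - i)))
        = ((-1)^k * real (1 choose k)) *\<^sub>R y ^ k" .
  qed
  also have "\<dots> = (\<Sum>k\<in>{0,1}. ((-1)^k * real (1 choose k)) *\<^sub>R y ^ k)"
    by (rule suminf_finite) (auto simp: binomial_eq_0)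
  also have "\<dots> = 1 - y" by simp
  finally show "(\<Sum>n. bc n *\<^sub>R y ^ n) * (\<Sum>n. bc n *\<^sub>R y ^ n) = 1 - y" .
qed

section \<open>Bounded complex-linear operators\<close>

lemma scaleC_minus1: "scaleC (-1) (x::'a::cvector) = - x"
  by (simp add: scaleC_minus_left scaleC_one)

lemma bop_add: "bounded_op T \<Longrightarrow> T (x + y) = T x + T y"
  by (simp add: bounded_op_def)
lemma bop_scaleC: "bounded_op T \<Longrightarrow> T (scaleC a x) = scaleC a (T x)"
  by (simp add: bounded_op_def)
lemma bop_zero: "bounded_op T \<Longrightarrow> T 0 = 0"
  using bop_scaleC[of T 0 0] by simp
lemma bop_minus: "bounded_op T \<Longrightarrow> T (- x) = - T x"
  using bop_scaleC[of T "-1" x] by (simp add: scaleC_minus1)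
lemma bop_diff: "bounded_op T \<Longrightarrow> T (x - y) = T x - T y"
  by (simp only: diff_conv_add_uminus bop_add bop_minus)
lemma bop_scaleR: "bounded_op T \<Longrightarrow> T (scaleR r x) = scaleR r (T x)"
  by (simp add: scaleR_scaleC bop_scaleC)
lemma bop_bound: "bounded_op T \<Longrightarrow> \<exists>K\<ge>0. \<forall>x. norm (T x) \<le> K * norm x"
proof -
  assume "bounded_op T"
  then obtain K where K: "\<forall>x. norm (T x) \<le> K * norm x" by (auto simp: bounded_op_def)
  hence "\<forall>x. norm (T x) \<le> max K 0 * norm x"
    by (meson max.cobounded1 mult_right_mono norm_ge_zero order_trans)
  thus ?thesis by (intro exI[of _ "max K 0"]) auto
qed
lemma bop_bounded_linear: "bounded_op T \<Longrightarrow> bounded_linear T"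
proof -
  assume b: "bounded_op T"
  then obtain K where K: "\<forall>x. norm (T x) \<le> K * norm x" by (auto simp: bounded_op_def)
  show ?thesis
    by (rule bounded_linear_intro[of _ K]) (use b K in \<open>auto simp: bop_add bop_scaleR mult.commute\<close>)
qed

lemma scaleC_scaleR_commute: "scaleC a (scaleR r (x::'a::cvector)) = scaleR r (scaleC a x)"
  by (simp add: scaleR_scaleC scaleC_scaleC mult.commute)

lemma bounded_linear_scaleC: "bounded_linear (scaleC a :: 'a::cnormed_vector \<Rightarrow> 'a)"
  by (rule bounded_linear_intro[of _ "cmod a"])
     (auto simp: scaleC_add_right scaleC_scaleR_commute norm_scaleC mult.commute)

lemma bounded_linear_cinner_right: "bounded_linear (cinner (x::'a::chilbert_space))"
  by (rule bounded_linear_intro[of _ "norm x"])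
     (auto simp: cinner_add_right cinner_scaleR_right scaleR_conv_of_real, metis cauchy_schwarz_c mult.commute)

lemma bounded_linear_cinner_left: "bounded_linear (\<lambda>v. cinner v (x::'a::chilbert_space))"
  by (rule bounded_linear_intro[of _ "norm x"])
     (auto simp: cinner_add_left cinner_scaleR_left scaleR_conv_of_real cauchy_schwarz_c)

section \<open>Positive operators\<close>

lemma pos_selfadj:
  assumes b: "bounded_op R" and p: "positive_op R"
  shows "cinner (R x) y = cinner x (R y)"
proof -
  let ?p = "cinner x (R y)" and ?s = "cinner y (R x)"
  have q: "\<And>z. cinner z (R z) \<in> \<real>" using p by (simp add: positive_op_def)
  have "cinner (x + y) (R (x + y)) = cinner x (R x) + cinner y (R y) + (?p + ?s)"
    using b by (simp add: bop_add cinner_add_left cinner_add_right)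
  hence r1: "?p + ?s \<in> \<real>" using q[of "x+y"] q[of x] q[of y]
    by (metis Reals_add Reals_diff add_diff_cancel_left')
  have "cinner (x + scaleC \<i> y) (R (x + scaleC \<i> y))
      = cinner x (R x) + cinner y (R y) + \<i> * (?p - ?s)"
    using b by (simp add: bop_add bop_scaleC cinner_add_left cinner_add_right cinner_scaleC_left
        cinner_scaleC_right algebra_simps)
  hence r2: "\<i> * (?p - ?s) \<in> \<real>" using q[of "x + scaleC \<i> y"] q[of x] q[of y]
    by (metis Reals_add Reals_diff add_diff_cancel_left')
  have "?s = cnj ?p" using r1 r2
    by (simp add: complex_is_Real_iff complex_eq_iff)
  moreover have "cinner (R x) y = cnj ?s" by (simp add: cinner_cnj)
  ultimately show ?thesis by simp
qed

lemma pos_zero: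
  assumes b: "bounded_op R" and p: "positive_op R" and z: "cinner z (R z) = 0"
  shows "R z = 0"
proof (rule ccontr)
  assume ne: "R z \<noteq> 0"
  define w where "w = R z"
  define a where "a = (norm w)\<^sup>2"
  define c where "c = Re (cinner w (R w))"
  have a: "a > 0" using ne by (simp add: a_def w_def)
  have c: "c \<ge> 0" using p by (simp add: c_def positive_op_def)
  define t where "t = - a / (c + 1)"
  have sa: "cinner w (R z) = of_real a" by (simp add: w_def a_def cinner_self)
  have sa2: "cinner z (R w) = of_real a" using pos_selfadj[OF b p, of z w] sa
    by (simp add: w_def)
  have "Re (cinner (z + scaleR t w) (R (z + scaleR t w))) = t * t * c + 2 * t * a"
    using b z sa sa2 by (simp add: bop_add bop_scaleR cinner_add_left cinner_add_right
        cinner_scaleR_left cinner_scaleR_right c_def algebra_simps)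
  also have "\<dots> = t * (t * c + 2 * a)" by (simp add: algebra_simps)
  also have "\<dots> < 0"
  proof (rule mult_neg_pos)
    show "t < 0" using a c by (simp add: t_def)
    have "t * c = - a * (c / (c + 1))" using c by (simp add: t_def)
    moreover have "c / (c + 1) < 1" using c by simp
    ultimately have "t * c > - a" using a
      by (metis mult.right_neutral mult_less_cancel_left_pos neg_less_iff_less mult_minus_left)
    thus "0 < t * c + 2 * a" using a by simp
  qed
  finally show False using p by (simp add: positive_op_def not_le[symmetric])
qed

lemma bounded_linear_bop_apply: "bounded_linear (\<lambda>z::'a::real_normed_vector bop. blinfun_apply (bop z) x)"
  by (rule bounded_linear_intro[of _ "norm x"])
     (auto simp: plus_bop.rep_eq scaleR_bop.rep_eq blinfun.add_left blinfun.scaleR_left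
       norm_bop.rep_eq norm_blinfun)

lemma norm_one_bop: "norm (1::'a::real_normed_vector bop) \<le> 1"
  by (simp add: norm_bop.rep_eq one_bop.rep_eq norm_blinfun_id_le)

lemma bop_apply_mult: "blinfun_apply (bop (a * b)) x = blinfun_apply (bop a) (blinfun_apply (bop b) x)"
  by (simp add: times_bop.rep_eq)

lemma bop_apply_one: "blinfun_apply (bop 1) x = x"
  by (simp add: one_bop.rep_eq)

lemma bop_apply_diff: "blinfun_apply (bop (a - b)) x = blinfun_apply (bop a) x - blinfun_apply (bop b) x"
  by (simp add: minus_bop.rep_eq blinfun.diff_left)

locale psq =
  fixes P :: "'h::chilbert_space \<Rightarrow> 'h" and K :: real
  assumes Pb: "bounded_op P" and Pp: "positive_op P" and Kpos: "K > 0"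
    and Kb: "\<And>x. (norm (P x))\<^sup>2 \<le> K * Re (cinner x (P x))"
begin

definition Y :: "'h \<Rightarrow> 'h" where "Y x = x - scaleR (1/K) (P x)"

lemma P_sa: "cinner (P x) z = cinner x (P z)"
  by (rule pos_selfadj[OF Pb Pp])

lemma Y_bop: "bounded_op Y"
proof -
  obtain C where C: "C \<ge> 0" "\<And>x. norm (P x) \<le> C * norm x" using bop_bound[OF Pb] by blast
  have "norm (Y x) \<le> (1 + C / K) * norm x" for x
  proof -
    have "norm (Y x) \<le> norm x + norm (scaleR (1/K) (P x))"
      unfolding Y_def by (rule norm_triangle_ineq4)
    also have "norm (scaleR (1/K) (P x)) = (1/K) * norm (P x)" using Kpos by simp
    also have "\<dots> \<le> (1/K) * (C * norm x)" using C Kpos by (intro mult_left_mono) auto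
    finally show ?thesis by (simp add: algebra_simps)
  qed
  thus ?thesis unfolding bounded_op_def
    by (auto simp: Y_def bop_add[OF Pb] bop_scaleC[OF Pb] scaleC_diff_right scaleC_scaleR_commute
        scaleR_add_right intro!: exI[of _ "1 + C / K"])
qed

lemma Y_sa: "cinner (Y x) z = cinner x (Y z)"
  by (simp add: Y_def cinner_diff_left cinner_diff_right cinner_scaleR_left cinner_scaleR_right P_sa)

lemma Y_norm: "norm (Y x) \<le> norm x"
proof -
  define r where "r = Re (cinner x (P x))"
  have r: "r \<ge> 0" using Pp by (simp add: r_def positive_op_def)
  have "(norm (Y x))\<^sup>2 = Re (cinner (Y x) (Y x))" by (simp add: Re_cinner_self)
  also have "\<dots> = (norm x)\<^sup>2 - 2 * r / K + (norm (P x))\<^sup>2 / K\<^sup>2"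
    using P_sa[of x x] Kpos
    by (simp add: Y_def cinner_diff_left cinner_diff_right cinner_scaleR_left cinner_scaleR_right
        Re_cinner_self r_def power2_eq_square field_simps)
  also have "(norm (P x))\<^sup>2 / K\<^sup>2 \<le> (K * r) / K\<^sup>2"
    using Kb[of x] Kpos by (simp add: r_def divide_right_mono)
  also have "(K * r) / K\<^sup>2 = r / K" using Kpos by (simp add: power2_eq_square)
  finally have "(norm (Y x))\<^sup>2 \<le> (norm x)\<^sup>2 - r / K" by simp
  also have "\<dots> \<le> (norm x)\<^sup>2" using r Kpos by simp
  finally show ?thesis by (rule power2_le_imp_le) simp
qed

lemma Ypow_bop: "bounded_op (Y ^^ n)"
proof (induction n)
  case 0 thus ?case by (auto simp: bounded_op_def intro!: exI[of _ 1])
next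
  case (Suc n)
  obtain C where C: "\<And>x. norm ((Y^^n) x) \<le> C * norm x" using Suc by (auto simp: bounded_op_def)
  obtain D where D: "D \<ge> 0" "\<And>x. norm (Y x) \<le> D * norm x" using bop_bound[OF Y_bop] by blast
  have "norm (Y ((Y^^n) x)) \<le> (D * C) * norm x" for x
  proof -
    have "norm (Y ((Y^^n) x)) \<le> D * norm ((Y^^n) x)" by (rule D(2))
    also have "\<dots> \<le> D * (C * norm x)" by (rule mult_left_mono[OF C D(1)])
    finally show ?thesis by (simp add: mult.assoc)
  qed
  thus ?case using Suc Y_bop by (auto simp: bounded_op_def)
qed

lemma Ypow_sa: "cinner ((Y ^^ n) x) z = cinner x ((Y ^^ n) z)"
proof (induction n arbitrary: x z)
  case 0 thus ?case by simp
next
  case (Suc n)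
  have "cinner ((Y ^^ Suc n) x) z = cinner ((Y ^^ n) x) (Y z)"
    by (simp add: Y_sa)
  also have "\<dots> = cinner x ((Y ^^ n) (Y z))" by (rule Suc)
  finally show ?case by (simp add: funpow_swap1)
qed

lemma Ypow_norm: "norm ((Y ^^ n) x) \<le> norm x"
  by (induction n) (auto intro: order_trans[OF Y_norm])

definition yb :: "'h bop" where "yb = Bop (Blinfun Y)"

lemma ap_yb: "blinfun_apply (bop yb) = Y"
  by (simp add: yb_def Bop_inverse bounded_linear_Blinfun_apply bop_bounded_linear[OF Y_bop])

lemma ap_pow: "blinfun_apply (bop (yb ^ n)) x = (Y ^^ n) x"
  by (induction n arbitrary: x) (auto simp: bop_apply_mult bop_apply_one ap_yb)

lemma norm_yb: "norm yb \<le> 1"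
  unfolding norm_bop.rep_eq ap_yb[symmetric]
  by (rule norm_blinfun_bound) (auto simp: ap_yb Y_norm)

definition S :: "'h bop" where "S = (\<Sum>n. bc n *\<^sub>R yb ^ n)"

lemma S_summable: "summable (\<lambda>n. bc n *\<^sub>R yb ^ n)"
  using sqrt_series(1)[OF norm_one_bop norm_yb] by (rule summable_norm_cancel)

lemma S_sq: "S * S = 1 - yb"
  unfolding S_def by (rule sqrt_series(2)[OF norm_one_bop norm_yb])

definition Sf :: "'h \<Rightarrow> 'h" where "Sf x = blinfun_apply (bop S) x"

lemma Sf_series: "Sf x = (\<Sum>n. bc n *\<^sub>R (Y ^^ n) x)"
proof -
  have "Sf x = (\<Sum>n. blinfun_apply (bop (bc n *\<^sub>R yb ^ n)) x)"
    unfolding Sf_def S_def by (rule bounded_linear.suminf[OF bounded_linear_bop_apply S_summable])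
  thus ?thesis by (simp add: scaleR_bop.rep_eq ap_pow blinfun.scaleR_left)
qed

lemma Sf_summable: "summable (\<lambda>n. bc n *\<^sub>R (Y ^^ n) x)"
proof -
  have "summable (\<lambda>n. blinfun_apply (bop (bc n *\<^sub>R yb ^ n)) x)"
    by (rule bounded_linear.summable[OF bounded_linear_bop_apply S_summable])
  thus ?thesis by (simp add: scaleR_bop.rep_eq ap_pow blinfun.scaleR_left)
qed

lemma Sf_Sf: "Sf (Sf x) = scaleR (1/K) (P x)"
proof -
  have "Sf (Sf x) = blinfun_apply (bop (S * S)) x" by (simp add: Sf_def bop_apply_mult)
  also have "\<dots> = x - Y x" by (simp add: S_sq bop_apply_diff bop_apply_one ap_yb)
  finally show ?thesis by (simp add: Y_def)
qed

lemma Sf_bop: "bounded_op Sf"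
proof -
  have add: "Sf (x + z) = Sf x + Sf z" for x z
    by (simp add: Sf_def blinfun.add_right)
  have sc: "Sf (scaleC a x) = scaleC a (Sf x)" for a x
  proof -
    have "scaleC a (Sf x) = (\<Sum>n. scaleC a (bc n *\<^sub>R (Y ^^ n) x))"
      unfolding Sf_series by (rule bounded_linear.suminf[OF bounded_linear_scaleC Sf_summable])
    also have "\<dots> = (\<Sum>n. bc n *\<^sub>R (Y ^^ n) (scaleC a x))"
      by (simp add: bop_scaleC[OF Ypow_bop] scaleC_scaleR_commute)
    finally show ?thesis by (simp add: Sf_series)
  qed
  have "norm (Sf x) \<le> norm (bop S) * norm x" for x
    unfolding Sf_def by (rule norm_blinfun)
  thus ?thesis using add sc unfolding bounded_op_def by blast
qed

lemma Sf_sa: "cinner (Sf x) z = cinner x (Sf z)"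
proof -
  have "cinner (Sf x) z = (\<Sum>n. cinner (bc n *\<^sub>R (Y ^^ n) x) z)"
    unfolding Sf_series by (rule bounded_linear.suminf[OF bounded_linear_cinner_left Sf_summable])
  also have "\<dots> = (\<Sum>n. cinner x (bc n *\<^sub>R (Y ^^ n) z))"
    by (simp add: cinner_scaleR_left cinner_scaleR_right Ypow_sa)
  also have "\<dots> = cinner x (Sf z)"
    unfolding Sf_series by (rule bounded_linear.suminf[OF bounded_linear_cinner_right Sf_summable, symmetric])
  finally show ?thesis .
qed

lemma Sf_pos: "positive_op Sf"
  unfolding positive_op_def
proof (intro allI conjI)
  fix x
  have "cnj (cinner x (Sf x)) = cinner x (Sf x)"
    by (simp add: cinner_cnj Sf_sa)
  thus "cinner x (Sf x) \<in> \<real>" by (simp add: Reals_cnj_iff)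
  let ?t = "\<lambda>n. Re (cinner x ((Y ^^ n) x))"
  have blRe: "bounded_linear (\<lambda>v. Re (cinner x v))"
    using bounded_linear_compose[OF bounded_linear_Re bounded_linear_cinner_right[of x]] by (simp add: o_def)
  have "Re (cinner x (Sf x)) = (\<Sum>n. Re (cinner x (bc n *\<^sub>R (Y ^^ n) x)))"
    unfolding Sf_series by (rule bounded_linear.suminf[OF blRe Sf_summable])
  also have "\<dots> = (\<Sum>n. bc n * ?t n)" by (simp add: cinner_scaleR_right)
  finally have eq: "Re (cinner x (Sf x)) = (\<Sum>n. bc n * ?t n)" .
  have sm1: "summable (\<lambda>n. bc n * ?t n)"
    using bounded_linear.summable[OF blRe Sf_summable] by (simp add: cinner_scaleR_right)
  have tb: "\<bar>?t n\<bar> \<le> (norm x)\<^sup>2" for n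
  proof -
    have "\<bar>?t n\<bar> \<le> cmod (cinner x ((Y ^^ n) x))" by (rule abs_Re_le_cmod)
    also have "\<dots> \<le> norm x * norm ((Y ^^ n) x)" by (rule cauchy_schwarz_c)
    also have "\<dots> \<le> norm x * norm x" by (intro mult_left_mono Ypow_norm) simp
    finally show ?thesis by (simp add: power2_eq_square)
  qed
  define g where "g n = (if n = 0 then 2 * (norm x)\<^sup>2 else 0) - \<bar>bc n\<bar> * (norm x)\<^sup>2" for n
  have gle: "g n \<le> bc n * ?t n" for n
  proof (cases "n = 0")
    case True thus ?thesis by (simp add: g_def Re_cinner_self)
  next
    case False
    have "- (\<bar>bc n\<bar> * (norm x)\<^sup>2) \<le> - (\<bar>bc n\<bar> * \<bar>?t n\<bar>)"
      using tb[of n] by (simp add: mult_left_mono)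
    also have "\<dots> \<le> bc n * ?t n" by (simp add: abs_mult[symmetric])
    finally show ?thesis using False by (simp add: g_def)
  qed
  have smA: "summable (\<lambda>n. (if n = 0 then 2 * (norm x)\<^sup>2 else (0::real)))"
    by (rule summable_finite[of "{0}"]) auto
  have smB: "summable (\<lambda>n. \<bar>bc n\<bar> * (norm x)\<^sup>2)"
    using summable_abs_bc by (rule summable_mult2)
  have "(\<Sum>n. g n) = (\<Sum>n. (if n = 0 then 2 * (norm x)\<^sup>2 else (0::real))) - (\<Sum>n. \<bar>bc n\<bar> * (norm x)\<^sup>2)"
    unfolding g_def by (rule suminf_diff[OF smA smB, symmetric])
  also have "(\<Sum>n. (if n = 0 then 2 * (norm x)\<^sup>2 else (0::real))) = 2 * (norm x)\<^sup>2"
    by (subst suminf_finite[of "{0}"]) auto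
  also have "(\<Sum>n. \<bar>bc n\<bar> * (norm x)\<^sup>2) = (\<Sum>n. \<bar>bc n\<bar>) * (norm x)\<^sup>2"
    by (rule suminf_mult2[OF summable_abs_bc, symmetric])
  finally have geq: "(\<Sum>n. g n) = 2 * (norm x)\<^sup>2 - (\<Sum>n. \<bar>bc n\<bar>) * (norm x)\<^sup>2" .
  have "(\<Sum>n. \<bar>bc n\<bar>) * (norm x)\<^sup>2 \<le> 2 * (norm x)\<^sup>2"
    by (rule mult_right_mono[OF suminf_abs_bc]) simp
  hence "(\<Sum>n. g n) \<ge> 0" using geq by linarith
  also have "(\<Sum>n. g n) \<le> (\<Sum>n. bc n * ?t n)"
    by (rule suminf_le[OF gle _ sm1]) (unfold g_def, intro summable_diff smA smB)
  finally show "0 \<le> Re (cinner x (Sf x))" using eq by simp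
qed

end

context psq begin

definition Q :: "'h \<Rightarrow> 'h" where "Q x = scaleR (sqrt K) (Sf x)"

lemma Q_bop: "bounded_op Q"
proof -
  obtain C where C: "C \<ge> 0" "\<And>x. norm (Sf x) \<le> C * norm x" using bop_bound[OF Sf_bop] by blast
  have "norm (Q x) \<le> (sqrt K * C) * norm x" for x
    using C(2)[of x] Kpos by (simp add: Q_def mult.assoc mult_left_mono)
  thus ?thesis unfolding bounded_op_def
    by (auto simp: Q_def bop_add[OF Sf_bop] bop_scaleC[OF Sf_bop] scaleC_scaleR_commute scaleR_add_right)
qed

lemma Q_pos: "positive_op Q"
  using Sf_pos Kpos by (auto simp: positive_op_def Q_def cinner_scaleR_right)

lemma Q_sq: "Q \<circ> Q = P"
proof
  fix x
  have "(Q \<circ> Q) x = scaleR (sqrt K * sqrt K) (Sf (Sf x))"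
    by (simp add: Q_def bop_scaleR[OF Sf_bop])
  also have "\<dots> = P x" using Kpos by (simp add: Sf_Sf)
  finally show "(Q \<circ> Q) x = P x" .
qed

lemma commute_Q:
  assumes Rb: "bounded_op R" and RR: "R \<circ> R = P"
  shows "R (Q x) = Q (R x)"
proof -
  have RP: "R (P x) = P (R x)" for x using RR by (metis comp_apply)
  have RY: "R (Y x) = Y (R x)" for x by (simp add: Y_def bop_diff[OF Rb] bop_scaleR[OF Rb] RP)
  have RYn: "R ((Y ^^ n) x) = (Y ^^ n) (R x)" for n x
    by (induction n arbitrary: x) (auto simp: RY)
  have "R (Sf x) = (\<Sum>n. R (bc n *\<^sub>R (Y ^^ n) x))"
    unfolding Sf_series by (rule bounded_linear.suminf[OF bop_bounded_linear[OF Rb] Sf_summable])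
  also have "\<dots> = Sf (R x)"
    by (simp add: Sf_series bop_scaleR[OF Rb] RYn)
  finally show ?thesis by (simp add: Q_def bop_scaleR[OF Rb])
qed

lemma unique_Q:
  assumes Rb: "bounded_op R" and Rp: "positive_op R" and RR: "R \<circ> R = P"
  shows "R = Q"
proof
  fix x
  define d where "d = R x - Q x"
  have RRx: "R (R x) = P x" using RR by (metis comp_apply)
  have QQx: "Q (Q x) = P x" using Q_sq by (metis comp_apply)
  have "cinner d (R d) + cinner d (Q d) = cinner d (R (R x) - R (Q x) + Q (R x) - Q (Q x))"
    by (simp add: d_def bop_diff[OF Rb] bop_diff[OF Q_bop] cinner_add_right cinner_diff_right
        algebra_simps)
  also have "\<dots> = 0" by (simp add: RRx QQx commute_Q[OF Rb RR])
  finally have sum0: "cinner d (R d) + cinner d (Q d) = 0" .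
  have r1: "cinner d (R d) \<in> \<real>" "Re (cinner d (R d)) \<ge> 0" using Rp by (auto simp: positive_op_def)
  have r2: "cinner d (Q d) \<in> \<real>" "Re (cinner d (Q d)) \<ge> 0" using Q_pos by (auto simp: positive_op_def)
  have "Re (cinner d (R d)) = 0" "Re (cinner d (Q d)) = 0"
    using sum0 r1(2) r2(2) by (metis add_nonneg_eq_0_iff plus_complex.sel(1) zero_complex.sel(1))+
  hence z1: "cinner d (R d) = 0" and z2: "cinner d (Q d) = 0" using r1(1) r2(1)
    by (auto simp: complex_is_Real_iff complex_eq_iff)
  have Rd: "R d = 0" by (rule pos_zero[OF Rb Rp z1])
  have Qd: "Q d = 0" by (rule pos_zero[OF Q_bop Q_pos z2])
  have "cinner d d = cinner d (R x) - cinner d (Q x)" by (simp add: d_def cinner_diff_right)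
  also have "\<dots> = cinner (R d) x - cinner (Q d) x"
    by (simp add: pos_selfadj[OF Rb Rp] pos_selfadj[OF Q_bop Q_pos])
  also have "\<dots> = 0" by (simp add: Rd Qd)
  finally have "d = 0" by (rule cinner_self_zero)
  thus "R x = Q x" by (simp add: d_def)
qed

lemma ex1_sqrt: "\<exists>!R. bounded_op R \<and> positive_op R \<and> R \<circ> R = P"
  using Q_bop Q_pos Q_sq unique_Q by blast

lemma op_sqrt_props: "bounded_op (op_sqrt P) \<and> positive_op (op_sqrt P) \<and> op_sqrt P \<circ> op_sqrt P = P"
  unfolding op_sqrt_def by (rule theI'[OF ex1_sqrt])

end

lemma bop_comp: "bounded_op S \<Longrightarrow> bounded_op T \<Longrightarrow> bounded_op (S \<circ> T)"
proof -
  assume s: "bounded_op S" and t: "bounded_op T"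
  obtain C where C: "C \<ge> 0" "\<And>x. norm (S x) \<le> C * norm x" using bop_bound[OF s] by blast
  obtain D where D: "D \<ge> 0" "\<And>x. norm (T x) \<le> D * norm x" using bop_bound[OF t] by blast
  have "norm (S (T x)) \<le> (C * D) * norm x" for x
  proof -
    have "norm (S (T x)) \<le> C * norm (T x)" by (rule C(2))
    also have "\<dots> \<le> C * (D * norm x)" by (rule mult_left_mono[OF D(2) C(1)])
    finally show ?thesis by (simp add: mult.assoc)
  qed
  thus ?thesis using s t unfolding bounded_op_def by (auto simp: bop_add bop_scaleC)
qed

lemma op_abs_bound:
  fixes T T' :: "'h::chilbert_space \<Rightarrow> 'h"
  assumes Tb: "bounded_op T" and T'b: "bounded_op T'"
    and adj: "\<And>x y. cinner (T x) y = cinner x (T' y)"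
    and c: "c \<ge> 0" and Tc: "\<And>x. norm (T x) \<le> c * norm x"
  shows "op_le (op_abs T) (\<lambda>x. scaleC (complex_of_real c) x)"
proof -
  have adjeq: "op_adjoint T = T'"
    unfolding op_adjoint_def
  proof (rule the_equality)
    show "\<forall>x y. cinner (T x) y = cinner x (T' y)" using adj by blast
    fix S assume "\<forall>x y. cinner (T x) y = cinner x (S y)"
    hence "\<And>x y. cinner x (S y) = cinner x (T' y)" using adj by metis
    thus "S = T'" by (intro ext cinner_ext) blast
  qed
  define P where "P = T' \<circ> T"
  have Pb: "bounded_op P" unfolding P_def by (rule bop_comp[OF T'b Tb])
  have Px: "cinner x (P x) = of_real ((norm (T x))\<^sup>2)" for x
    by (simp add: P_def adj[symmetric] cinner_self)
  have Pp: "positive_op P" by (simp add: positive_op_def Px)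
  obtain D where D: "D \<ge> 0" "\<And>x. norm (T' x) \<le> D * norm x" using bop_bound[OF T'b] by blast
  define K where "K = (D + 1)\<^sup>2"
  have Kpos: "K > 0" using D(1) by (simp add: K_def)
  have Kb: "(norm (P x))\<^sup>2 \<le> K * Re (cinner x (P x))" for x
  proof -
    have "norm (P x) \<le> (D + 1) * norm (T x)"
      using D(2)[of "T x"] by (simp add: P_def) (smt (verit) mult_right_mono norm_ge_zero)
    hence "(norm (P x))\<^sup>2 \<le> ((D + 1) * norm (T x))\<^sup>2" by (rule power_mono) simp
    thus ?thesis by (simp add: Px K_def power_mult_distrib)
  qed
  interpret psq P K using Pb Pp Kpos Kb by unfold_locales auto
  define R where "R = op_sqrt P"
  have R: "bounded_op R" "positive_op R" "R \<circ> R = P" using op_sqrt_props by (auto simp: R_def)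
  have absT: "op_abs T = R" by (simp add: op_abs_def adjeq R_def P_def)
  have Rn: "norm (R x) \<le> c * norm x" for x
  proof -
    have "(norm (R x))\<^sup>2 = Re (cinner (R x) (R x))" by (simp add: Re_cinner_self)
    also have "\<dots> = Re (cinner x (R (R x)))" by (simp add: pos_selfadj[OF R(1) R(2)])
    also have "R (R x) = P x" using R(3) by (metis comp_apply)
    also have "Re (cinner x (P x)) = (norm (T x))\<^sup>2" by (simp add: Px)
    also have "\<dots> \<le> (c * norm x)\<^sup>2" by (rule power_mono[OF Tc]) simp
    finally show ?thesis by (rule power2_le_imp_le) (simp add: c)
  qed
  show ?thesis unfolding absT op_le_def positive_op_def
  proof (intro allI conjI)
    fix x
    have rr: "cinner x (R x) \<in> \<real>" and rp: "Re (cinner x (R x)) \<ge> 0"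
      using R(2) by (auto simp: positive_op_def)
    have e: "cinner x (scaleC (complex_of_real c) x - R x)
        = of_real (c * (norm x)\<^sup>2) - cinner x (R x)"
      by (simp add: cinner_diff_right cinner_scaleC_right cinner_self)
    show "cinner x (scaleC (complex_of_real c) x - R x) \<in> \<real>" unfolding e using rr by simp
    have "Re (cinner x (R x)) \<le> cmod (cinner x (R x))" by (rule complex_Re_le_cmod)
    also have "\<dots> \<le> norm x * norm (R x)" by (rule cauchy_schwarz_c)
    also have "\<dots> \<le> norm x * (c * norm x)" by (rule mult_left_mono[OF Rn]) simp
    finally have "Re (cinner x (R x)) \<le> c * (norm x)\<^sup>2" by (simp add: power2_eq_square algebra_simps)
    thus "0 \<le> Re (cinner x (scaleC (complex_of_real c) x - R x))" unfolding e by simp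
  qed
qed

section \<open>C*-algebra facts\<close>

lemma cstar_zero[simp]: "cstar (0::'a::unital_cstar_algebra) = 0"
proof -
  have "cstar (0::'a) + cstar 0 = cstar 0" using cstar_add[of "0::'a" 0] by simp
  thus ?thesis by simp
qed

lemma cstar_minus: "cstar (- x::'a::unital_cstar_algebra) = - cstar x"
proof -
  have "cstar x + cstar (-x) = 0" using cstar_add[of x "-x", symmetric] by simp
  thus ?thesis by (simp only: add_eq_0_iff)
qed

lemma cstar_diff: "cstar (x - y::'a::unital_cstar_algebra) = cstar x - cstar y"
  by (simp only: diff_conv_add_uminus cstar_add cstar_minus)

lemma cstar_scaleR: "cstar (scaleR r x::'a::unital_cstar_algebra) = scaleR r (cstar x)"
  by (simp add: scaleR_scaleC cstar_scaleC)

lemma cstar_one[simp]: "cstar (1::'a::unital_cstar_algebra) = 1"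
proof -
  have "cstar 1 * x = x" for x :: 'a
  proof -
    have "cstar 1 * x = cstar 1 * cstar (cstar x)" by (simp add: cstar_cstar)
    also have "\<dots> = cstar (cstar x * 1)" by (rule cstar_mult[symmetric])
    also have "\<dots> = x" by (simp add: cstar_cstar)
    finally show ?thesis .
  qed
  from this[of 1] show ?thesis by simp
qed

lemma norm_cstar[simp]: "norm (cstar x) = norm (x::'a::unital_cstar_algebra)"
proof -
  have le: "norm y \<le> norm (cstar y)" for y :: 'a
  proof (cases "y = 0")
    case True thus ?thesis by simp
  next
    case False
    have "(norm y)\<^sup>2 = norm (cstar y * y)" by (simp add: cstar_identity)
    also have "\<dots> \<le> norm (cstar y) * norm y" by (rule norm_mult_ineq)
    finally have "norm y * norm y \<le> norm (cstar y) * norm y" by (simp add: power2_eq_square)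
    thus ?thesis using False by simp
  qed
  show ?thesis using le[of x] le[of "cstar x"] by (simp add: cstar_cstar)
qed

lemma bounded_linear_cstar: "bounded_linear (cstar :: 'a::unital_cstar_algebra \<Rightarrow> 'a)"
  by (rule bounded_linear_intro[of _ 1]) (auto simp: cstar_add cstar_scaleR)

lemma cstar_power: "cstar (y ^ n) = cstar (y::'a::unital_cstar_algebra) ^ n"
proof (induction n)
  case 0 thus ?case by simp
next
  case (Suc n)
  have "cstar (y ^ Suc n) = cstar (y ^ n) * cstar y" by (simp add: cstar_mult)
  thus ?case using Suc by (simp add: power_commutes)
qed

lemma alg_sqrt:
  fixes c :: "'a::unital_cstar_algebra"
  assumes r: "norm c \<le> r"
  shows "\<exists>D. (r\<^sup>2) *\<^sub>R 1 - cstar c * c = cstar D * D"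
proof (cases "r = 0")
  case True
  hence "c = 0" using r by simp
  thus ?thesis using True by (intro exI[of _ 0]) simp
next
  case False
  hence rp: "r > 0" using r norm_ge_zero[of c] by linarith
  define y where "y = (1 / r\<^sup>2) *\<^sub>R (cstar c * c)"
  have ny: "norm y \<le> 1"
  proof -
    have "norm y = (norm c)\<^sup>2 / r\<^sup>2" using rp by (simp add: y_def cstar_identity)
    also have "\<dots> \<le> 1" using r rp by (simp add: power_mono)
    finally show ?thesis .
  qed
  have cy: "cstar y = y" by (simp add: y_def cstar_scaleR cstar_mult cstar_cstar)
  define S where "S = (\<Sum>n. bc n *\<^sub>R y ^ n)"
  have SS: "S * S = 1 - y" unfolding S_def by (rule sqrt_series(2)) (simp_all add: ny)
  have sm: "summable (\<lambda>n. bc n *\<^sub>R y ^ n)"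
    by (rule summable_norm_cancel[OF sqrt_series(1)]) (simp_all add: ny)
  have cS: "cstar S = S"
  proof -
    have "cstar S = (\<Sum>n. cstar (bc n *\<^sub>R y ^ n))"
      unfolding S_def by (rule bounded_linear.suminf[OF bounded_linear_cstar sm])
    also have "\<dots> = S" by (simp add: S_def cstar_scaleR cstar_power cy)
    finally show ?thesis .
  qed
  have "cstar (r *\<^sub>R S) * (r *\<^sub>R S) = (r * r) *\<^sub>R (S * S)" by (simp add: cstar_scaleR cS)
  also have "\<dots> = (r\<^sup>2) *\<^sub>R 1 - cstar c * c" using rp
    by (simp add: SS y_def power2_eq_square scaleR_diff_right)
  finally show ?thesis by (intro exI[of _ "r *\<^sub>R S"]) simp
qed

context
  fixes \<Phi> :: "'a::unital_cstar_algebra \<Rightarrow> ('h::chilbert_space \<Rightarrow> 'h)"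
  assumes ucp: "ucp_map \<Phi>"
begin

lemma phi_bop: "bounded_op (\<Phi> a)" using ucp by (simp add: ucp_map_def)
lemma phi_add: "\<Phi> (a + b) x = \<Phi> a x + \<Phi> b x" using ucp by (simp add: ucp_map_def)
lemma phi_scaleC: "\<Phi> (scaleC c a) x = scaleC c (\<Phi> a x)" using ucp by (simp add: ucp_map_def)
lemma phi_one: "\<Phi> 1 x = x" using ucp by (simp add: ucp_map_def)
lemma phi_zero: "\<Phi> 0 x = 0" using phi_scaleC[of 0 0 x] by simp
lemma phi_minus: "\<Phi> (- a) x = - \<Phi> a x"
  using phi_scaleC[of "-1" a x] by (simp add: scaleC_minus1)
lemma phi_diff: "\<Phi> (a - b) x = \<Phi> a x - \<Phi> b x"
  by (simp only: diff_conv_add_uminus phi_add phi_minus)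
lemma phi_scaleR: "\<Phi> (scaleR r a) x = scaleR r (\<Phi> a x)"
  by (simp add: scaleR_scaleC phi_scaleC)

lemma pos_gen:
  fixes e :: "nat \<Rightarrow> 'a" and v :: "nat \<Rightarrow> 'h"
  shows "(\<Sum>i<n. \<Sum>j<n. cinner (v i) (\<Phi> (cstar (e i) * e j) (v j))) \<in> \<real>
    \<and> 0 \<le> Re (\<Sum>i<n. \<Sum>j<n. cinner (v i) (\<Phi> (cstar (e i) * e j) (v j)))"
proof -
  have "pos_matrix n (\<lambda>i j. cstar (e i) * e j)"
    unfolding pos_matrix_def
  proof (intro exI[of _ "\<lambda>k i. if k = 0 then e i else 0"] allI impI)
    fix i j assume "i < n" "j < n"
    hence "0 \<in> {..<n}" by simp
    have "(\<Sum>k<n. cstar (if k = 0 then e i else 0) * (if k = 0 then e j else 0))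
        = (\<Sum>k<n. if k = 0 then cstar (e i) * e j else 0)"
      by (rule sum.cong) auto
    also have "\<dots> = cstar (e i) * e j" using \<open>0 \<in> {..<n}\<close> by (simp add: sum.delta)
    finally show "cstar (e i) * e j = (\<Sum>k<n. cstar (if k = 0 then e i else 0) * (if k = 0 then e j else 0))" ..
  qed
  thus ?thesis using ucp unfolding ucp_map_def by blast
qed

lemma pos1: "cinner v (\<Phi> (cstar c * c) v) \<in> \<real> \<and> 0 \<le> Re (cinner v (\<Phi> (cstar c * c) v))"
  using pos_gen[where e="\<lambda>_. c" and v="\<lambda>_. v" and n=1] by simp

lemma herm: "cinner q (\<Phi> (cstar a) p) = cinner (\<Phi> a q) p"
proof -
  have two: "\<And>p q. cinner p (\<Phi> a q) + cinner q (\<Phi> (cstar a) p) \<in> \<real>"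
  proof -
    fix p q
    define v :: "nat \<Rightarrow> 'h" where "v k = (if k = 0 then p else q)" for k
    define e :: "nat \<Rightarrow> 'a" where "e k = (if k = 0 then 1 else a)" for k
    have h: "(\<Sum>i<2. \<Sum>j<2. cinner (v i) (\<Phi> (cstar (e i) * e j) (v j))) \<in> \<real>"
      using pos_gen[where e=e and v=v and n=2] by blast
    have "(\<Sum>i<2. \<Sum>j<2. cinner (v i) (\<Phi> (cstar (e i) * e j) (v j)))
        = cinner p p + (cinner p (\<Phi> a q) + cinner q (\<Phi> (cstar a) p)) + cinner q (\<Phi> (cstar a * a) q)"
      by (simp add: numeral_2_eq_2 phi_one v_def e_def)
    with h have "cinner p p + (cinner p (\<Phi> a q) + cinner q (\<Phi> (cstar a) p)) + cinner q (\<Phi> (cstar a * a) q) \<in> \<real>"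
      by simp
    moreover have "cinner p p \<in> \<real>" by (rule cinner_self_real)
    moreover have "cinner q (\<Phi> (cstar a * a) q) \<in> \<real>" using pos1 by blast
    ultimately show "cinner p (\<Phi> a q) + cinner q (\<Phi> (cstar a) p) \<in> \<real>"
      by (metis Reals_diff add_diff_cancel_left' add_diff_cancel_right')
  qed
  let ?p = "cinner p (\<Phi> a q)" and ?s = "cinner q (\<Phi> (cstar a) p)"
  have r1: "?p + ?s \<in> \<real>" by (rule two)
  have "cinner (scaleC \<i> p) (\<Phi> a q) + cinner q (\<Phi> (cstar a) (scaleC \<i> p)) \<in> \<real>" by (rule two)
  hence r2: "- \<i> * ?p + \<i> * ?s \<in> \<real>"
    by (simp add: cinner_scaleC_left cinner_scaleC_right bop_scaleC[OF phi_bop])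
  have "?s = cnj ?p" using r1 r2 by (simp add: complex_is_Real_iff complex_eq_iff)
  thus ?thesis by (simp add: cinner_cnj)
qed

end

context
  fixes \<Phi> :: "'a::unital_cstar_algebra \<Rightarrow> ('h::chilbert_space \<Rightarrow> 'h)"
  assumes ucp: "ucp_map \<Phi>"
begin

lemma key3:
  fixes C D :: 'a and u w :: 'h
  shows "0 \<le> Re (cinner u (\<Phi> (C * cstar C) u)) - (norm (\<Phi> (cstar C) u))\<^sup>2
      + Re (cinner w (\<Phi> (cstar D * D) w)) - (norm (\<Phi> D w))\<^sup>2
      + 2 * Re (cinner u (\<Phi> (C * D) w - \<Phi> C (\<Phi> D w)))"
proof -
  define a where "a = \<Phi> (cstar C) u"
  define b where "b = \<Phi> D w"
  define z where "z = a + b"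
  define v :: "nat \<Rightarrow> 'h" where "v k = (if k = 0 then - z else if k = 1 then u else w)" for k
  define e :: "nat \<Rightarrow> 'a" where "e k = (if k = 0 then 1 else if k = 1 then cstar C else D)" for k
  have h: "0 \<le> Re (\<Sum>i<3. \<Sum>j<3. cinner (v i) (\<Phi> (cstar (e i) * e j) (v j)))"
    using pos_gen[OF ucp, where e=e and v=v and n=3] by blast
  have mC: "\<Phi> C (- z) = - \<Phi> C z" by (rule bop_minus[OF phi_bop[OF ucp]])
  have mD: "\<Phi> (cstar D) (- z) = - \<Phi> (cstar D) z" by (rule bop_minus[OF phi_bop[OF ucp]])
  have hC: "cinner u (\<Phi> C z) = cinner a z"
    using herm[OF ucp, of u "cstar C" z] by (simp add: cstar_cstar a_def)
  have hD: "cinner w (\<Phi> (cstar D) z) = cinner b z"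
    using herm[OF ucp, of w D z] by (simp add: b_def)
  have hCD: "cinner w (\<Phi> (cstar D * cstar C) u) = cnj (cinner u (\<Phi> (C * D) w))"
    using herm[OF ucp, of w "C * D" u] by (simp add: cstar_mult cinner_cnj)
  have hab: "cinner a b = cinner u (\<Phi> C b)"
    using herm[OF ucp, of u "cstar C" b] by (simp add: cstar_cstar a_def)
  have "(\<Sum>i<3. \<Sum>j<3. cinner (v i) (\<Phi> (cstar (e i) * e j) (v j)))
      = cinner z z - cinner z a - cinner z b - cinner a z - cinner b z
        + cinner u (\<Phi> (C * cstar C) u) + cinner u (\<Phi> (C * D) w)
        + cnj (cinner u (\<Phi> (C * D) w)) + cinner w (\<Phi> (cstar D * D) w)"
    by (simp add: numeral_3_eq_3 v_def e_def phi_one[OF ucp] cstar_cstar mC mD hC hD hCD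
        cinner_minus_left cinner_minus_right a_def[symmetric] b_def[symmetric] algebra_simps)
  also have "cinner z z - cinner z a - cinner z b - cinner a z - cinner b z = - cinner z z"
    by (simp add: z_def cinner_add_left cinner_add_right algebra_simps)
  finally have eq: "Re (\<Sum>i<3. \<Sum>j<3. cinner (v i) (\<Phi> (cstar (e i) * e j) (v j)))
      = - Re (cinner z z) + Re (cinner u (\<Phi> (C * cstar C) u)) + 2 * Re (cinner u (\<Phi> (C * D) w))
        + Re (cinner w (\<Phi> (cstar D * D) w))" by simp
  have zz: "Re (cinner z z) = (norm a)\<^sup>2 + (norm b)\<^sup>2 + 2 * Re (cinner u (\<Phi> C b))"
  proof -
    have "cinner z z = cinner a a + cinner b b + (cinner a b + cnj (cinner a b))"
      by (simp add: z_def cinner_add_left cinner_add_right cinner_cnj algebra_simps)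
    thus ?thesis by (simp add: Re_cinner_self hab)
  qed
  have "Re (cinner u (\<Phi> (C * D) w - \<Phi> C (\<Phi> D w)))
      = Re (cinner u (\<Phi> (C * D) w)) - Re (cinner u (\<Phi> C b))"
    by (simp add: cinner_diff_right b_def)
  thus ?thesis using h eq zz by (simp add: a_def b_def)
qed

end

lemma quad_bound:
  fixes A b G :: real
  assumes b: "b \<ge> 0" and A: "A \<ge> 0" and G: "G \<ge> 0"
    and h: "\<And>t. t \<ge> 0 \<Longrightarrow> 0 \<le> A * t\<^sup>2 - 2 * t * b + G"
  shows "b\<^sup>2 \<le> A * G"
proof (cases "b = 0")
  case True thus ?thesis using A G by simp
next
  case False
  hence bp: "b > 0" using b by simp
  show ?thesis
  proof (cases "A = 0")
    case True
    have "0 \<le> A * ((G + 1) / (2 * b))\<^sup>2 - 2 * ((G + 1) / (2 * b)) * b + G"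
      using h[of "(G + 1) / (2 * b)"] bp G by simp
    thus ?thesis using True bp by simp
  next
    case False
    hence Ap: "A > 0" using A by simp
    have "0 \<le> A * (b / A)\<^sup>2 - 2 * (b / A) * b + G" using h[of "b / A"] Ap b by simp
    also have "A * (b / A)\<^sup>2 - 2 * (b / A) * b + G = G - b\<^sup>2 / A"
      using Ap by (simp add: field_simps power2_eq_square)
    finally have "b\<^sup>2 / A \<le> G" by simp
    thus ?thesis using Ap by (simp add: pos_divide_le_eq mult.commute)
  qed
qed

context
  fixes \<Phi> :: "'a::unital_cstar_algebra \<Rightarrow> ('h::chilbert_space \<Rightarrow> 'h)"
  assumes ucp: "ucp_map \<Phi>"
begin

lemma phi_bound:
  assumes "norm c \<le> r"
  shows "Re (cinner u (\<Phi> (cstar c * c) u)) \<le> r\<^sup>2 * (norm u)\<^sup>2"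
proof -
  obtain D where D: "(r\<^sup>2) *\<^sub>R 1 - cstar c * c = cstar D * D" using alg_sqrt[OF assms] by blast
  have "0 \<le> Re (cinner u (\<Phi> (cstar D * D) u))" using pos1[OF ucp] by blast
  also have "\<Phi> (cstar D * D) u = r\<^sup>2 *\<^sub>R u - \<Phi> (cstar c * c) u"
    by (simp flip: D add: phi_diff[OF ucp] phi_scaleR[OF ucp] phi_one[OF ucp])
  also have "Re (cinner u (r\<^sup>2 *\<^sub>R u - \<Phi> (cstar c * c) u))
      = r\<^sup>2 * (norm u)\<^sup>2 - Re (cinner u (\<Phi> (cstar c * c) u))"
    by (simp add: cinner_diff_right cinner_scaleR_right Re_cinner_self)
  finally show ?thesis by simp
qed

lemma T_bound:
  assumes C: "norm C \<le> r1" and D: "norm D \<le> r2" and r1: "r1 \<ge> 0" and r2: "r2 \<ge> 0"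
  shows "norm (\<Phi> (C * D) w - \<Phi> C (\<Phi> D w)) \<le> r1 * r2 * norm w"
proof -
  define x where "x = \<Phi> (C * D) w - \<Phi> C (\<Phi> D w)"
  define b where "b = (norm x)\<^sup>2"
  have q: "0 \<le> (r1\<^sup>2 * b) * t\<^sup>2 - 2 * t * b + r2\<^sup>2 * (norm w)\<^sup>2" if t: "t \<ge> 0" for t
  proof -
    define u where "u = scaleR (- t) x"
    have k: "0 \<le> Re (cinner u (\<Phi> (C * cstar C) u)) - (norm (\<Phi> (cstar C) u))\<^sup>2
      + Re (cinner w (\<Phi> (cstar D * D) w)) - (norm (\<Phi> D w))\<^sup>2
      + 2 * Re (cinner u (\<Phi> (C * D) w - \<Phi> C (\<Phi> D w)))" by (rule key3[OF ucp])
    have a1: "Re (cinner u (\<Phi> (C * cstar C) u)) \<le> r1\<^sup>2 * (norm u)\<^sup>2"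
      using phi_bound[of "cstar C" r1 u] C by (simp add: cstar_cstar)
    have a2: "Re (cinner w (\<Phi> (cstar D * D) w)) \<le> r2\<^sup>2 * (norm w)\<^sup>2"
      using phi_bound[of D r2 w] D by simp
    have nu: "(norm u)\<^sup>2 = t\<^sup>2 * b" using t by (simp add: u_def b_def power_mult_distrib)
    have cu: "Re (cinner u (\<Phi> (C * D) w - \<Phi> C (\<Phi> D w))) = - t * b"
      by (simp add: u_def x_def[symmetric] cinner_minus_left cinner_scaleR_left Re_cinner_self b_def)
    have "0 \<le> r1\<^sup>2 * (t\<^sup>2 * b) + r2\<^sup>2 * (norm w)\<^sup>2 + 2 * (- t * b)"
      using k a1 a2 nu cu by (smt (verit) zero_le_power2)
    thus ?thesis by (simp add: algebra_simps)
  qed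
  have "b\<^sup>2 \<le> (r1\<^sup>2 * b) * (r2\<^sup>2 * (norm w)\<^sup>2)"
    by (rule quad_bound) (use q in \<open>auto simp: b_def\<close>)
  hence "b \<le> (r1 * r2 * norm w)\<^sup>2"
  proof (cases "b = 0")
    case True thus ?thesis by simp
  next
    case False
    hence bp: "b > 0" by (simp add: b_def)
    assume "b\<^sup>2 \<le> r1\<^sup>2 * b * (r2\<^sup>2 * (norm w)\<^sup>2)"
    hence "b * b \<le> b * (r1 * r2 * norm w)\<^sup>2" by (simp add: power2_eq_square algebra_simps)
    thus ?thesis using bp by simp
  qed
  hence "(norm x)\<^sup>2 \<le> (r1 * r2 * norm w)\<^sup>2" by (simp add: b_def)
  hence "norm x \<le> r1 * r2 * norm w" by (rule power2_le_imp_le) (simp add: r1 r2)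
  thus ?thesis by (simp add: x_def)
qed

lemma shift:
  "\<Phi> ((C + scaleC \<mu> 1) * (D + scaleC \<nu> 1)) x - \<Phi> (C + scaleC \<mu> 1) (\<Phi> (D + scaleC \<nu> 1) x)
   = \<Phi> (C * D) x - \<Phi> C (\<Phi> D x)"
proof -
  have prod: "(C + scaleC \<mu> 1) * (D + scaleC \<nu> 1) = C * D + scaleC \<nu> C + scaleC \<mu> D + scaleC (\<mu> * \<nu>) 1"
    by (simp add: distrib_left distrib_right scaleC_mult_left[symmetric] scaleC_mult_right[symmetric]
        scaleC_scaleC scaleC_add_right mult.commute algebra_simps)
  show ?thesis unfolding prod
    by (simp add: phi_add[OF ucp] phi_scaleC[OF ucp] phi_one[OF ucp]
        bop_add[OF phi_bop[OF ucp]] bop_scaleC[OF phi_bop[OF ucp]] scaleC_add_right scaleC_scaleC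
        algebra_simps)
qed

end

lemma bop_diff_fun: "bounded_op S \<Longrightarrow> bounded_op U \<Longrightarrow> bounded_op (\<lambda>x. S x - U x)"
proof -
  assume s: "bounded_op S" and u: "bounded_op U"
  obtain C where C: "C \<ge> 0" "\<And>x. norm (S x) \<le> C * norm x" using bop_bound[OF s] by blast
  obtain D where D: "D \<ge> 0" "\<And>x. norm (U x) \<le> D * norm x" using bop_bound[OF u] by blast
  have bnd: "norm (S x - U x) \<le> (C + D) * norm x" for x
  proof -
    have "norm (S x - U x) \<le> norm (S x) + norm (U x)" by (rule norm_triangle_ineq4)
    also have "\<dots> \<le> C * norm x + D * norm x" using C(2) D(2) by (rule add_mono)
    finally show ?thesis by (simp add: algebra_simps)
  qed
  have "\<exists>K. \<forall>x. norm (S x - U x) \<le> K * norm x" using bnd by blast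
  thus ?thesis using s u unfolding bounded_op_def
    by (auto simp: bop_add bop_scaleC scaleC_diff_right)
qed

theorem mainTheorem11:
  fixes \<Phi> :: "'a::unital_cstar_algebra \<Rightarrow> ('h::chilbert_space \<Rightarrow> 'h)"
    and A B :: 'a and m1 M1 m2 M2 :: complex
  assumes "ucp_map \<Phi>"
    and "in_diam_ball m1 M1 A"
    and "in_diam_ball m2 M2 B"
  shows "op_le (op_abs (\<lambda>x. \<Phi> (A * B) x - \<Phi> A (\<Phi> B x)))
           (\<lambda>x. scaleC (complex_of_real (cmod (M1 - m1) * cmod (M2 - m2) / 4)) x)"
proof -
  note ucp = assms(1)
  define C where "C = A - scaleC ((M1 + m1) / 2) 1"
  define D where "D = B - scaleC ((M2 + m2) / 2) 1"
  have nC: "norm C \<le> cmod (M1 - m1) / 2" using assms(2) by (simp add: in_diam_ball_def C_def)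
  have nD: "norm D \<le> cmod (M2 - m2) / 2" using assms(3) by (simp add: in_diam_ball_def D_def)
  have A: "A = C + scaleC ((M1 + m1) / 2) 1" by (simp add: C_def)
  have B: "B = D + scaleC ((M2 + m2) / 2) 1" by (simp add: D_def)
  define T where "T = (\<lambda>x. \<Phi> (A * B) x - \<Phi> A (\<Phi> B x))"
  define T' where "T' = (\<lambda>y. \<Phi> (cstar B * cstar A) y - \<Phi> (cstar B) (\<Phi> (cstar A) y))"
  have Tb: "bounded_op T" unfolding T_def
    using bop_diff_fun[OF phi_bop[OF ucp] bop_comp[OF phi_bop[OF ucp] phi_bop[OF ucp]]]
    by (simp add: o_def)
  have T'b: "bounded_op T'" unfolding T'_def
    using bop_diff_fun[OF phi_bop[OF ucp] bop_comp[OF phi_bop[OF ucp] phi_bop[OF ucp]]]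
    by (simp add: o_def)
  have adj: "cinner (T x) y = cinner x (T' y)" for x y
  proof -
    have "cinner (\<Phi> (A * B) x) y = cinner x (\<Phi> (cstar B * cstar A) y)"
      using herm[OF ucp, of x "A * B" y] by (simp add: cstar_mult)
    moreover have "cinner (\<Phi> A (\<Phi> B x)) y = cinner x (\<Phi> (cstar B) (\<Phi> (cstar A) y))"
      using herm[OF ucp, of "\<Phi> B x" A y] herm[OF ucp, of x B "\<Phi> (cstar A) y"] by simp
    ultimately show ?thesis by (simp add: T_def T'_def cinner_diff_left cinner_diff_right)
  qed
  have Tn: "norm (T x) \<le> (cmod (M1 - m1) * cmod (M2 - m2) / 4) * norm x" for x
  proof -
    have "T x = \<Phi> (C * D) x - \<Phi> C (\<Phi> D x)"
      unfolding T_def A B by (rule shift[OF ucp])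
    also have "norm \<dots> \<le> (cmod (M1 - m1) / 2) * (cmod (M2 - m2) / 2) * norm x"
      by (rule T_bound[OF ucp nC nD]) auto
    finally show ?thesis by simp
  qed
  have "op_le (op_abs T) (\<lambda>x. scaleC (complex_of_real (cmod (M1 - m1) * cmod (M2 - m2) / 4)) x)"
    by (rule op_abs_bound[OF Tb T'b adj _ Tn]) simp
  thus ?thesis by (simp add: T_def)
qed

end
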